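(* For every $\omega_p\in[0,\pi]$ and every $\theta_p$ (with $\theta_p\in\{0,\pi\}$ mod $2\pi$ when $\omega_p\in\{0,\pi\}$), $$\sup_{f\in\mathbb{RF}_{\omega_p,\theta_p}}\theta_f'(\omega_p)=\sup_{f\in\mathbb{AP}_{\omega_p,\theta_p}}\theta_f'(\omega_p).$$
   Context: $\mathbb{D}$ is the open unit disk. $\mathcal{RH}_\infty$: proper real-rational functions with all poles in $\mathbb{D}$, with $\|f\|_{H_\infty}=\sup_{\omega\in(-\pi,\pi]}|f(e^{j\omega})|$. $\theta_f(\omega):=\angle f(e^{j\omega})$ is a continuous choice of argument and $\theta_f'$ its derivative in $\omega$. $\mathbb{RF}_{\omega_p,\theta_p}:=\{f\in\mathcal{RH}_\infty:\ \|f\|_{H_\infty}=|f(e^{j\omega_p})|=1,\ \theta_f(\omega_p)=\theta_p\ (\mathrm{mod}\ 2\pi)\}$. $\mathbb{AP}$ is the set of $f\in\mathcal{RH}_\infty$ with $|f(e^{j\omega})|=1$ for all $\omega$; $\mathbb{AP}_{\omega_p,\theta_p}:=\mathbb{AP}\cap\mathbb{RF}_{\omega_p,\theta_p}$. *)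

theory Defs
  imports "HOL-Analysis.Analysis" "HOL-Computational_Algebra.Polynomial"
begin

definition RH_inf :: "(complex \<Rightarrow> complex) \<Rightarrow> bool" where
  "RH_inf f \<longleftrightarrow> (\<exists>p q :: real poly. q \<noteq> 0 \<and> degree p \<le> degree q \<and>
     (\<forall>z. poly (map_poly complex_of_real q) z = 0 \<longrightarrow> norm z < 1) \<and>
     (\<forall>z. poly (map_poly complex_of_real q) z \<noteq> 0 \<longrightarrow>
        f z = poly (map_poly complex_of_real p) z / poly (map_poly complex_of_real q) z))"

definition Hinf_norm :: "(complex \<Rightarrow> complex) \<Rightarrow> real" where
  "Hinf_norm f = (SUP w\<in>{-pi<..pi}. cmod (f (cis w)))"

definition phase_deriv :: "(complex \<Rightarrow> complex) \<Rightarrow> real \<Rightarrow> real" where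
  "phase_deriv f w = (THE d. \<exists>\<theta> e. e > 0 \<and> continuous_on {w - e<..<w + e} \<theta> \<and>
     (\<forall>t. \<bar>t - w\<bar> < e \<longrightarrow> f (cis t) = complex_of_real (cmod (f (cis t))) * cis (\<theta> t)) \<and>
     (\<theta> has_real_derivative d) (at w))"

definition RF :: "real \<Rightarrow> real \<Rightarrow> (complex \<Rightarrow> complex) set" where
  "RF wp tp = {f. RH_inf f \<and> Hinf_norm f = 1 \<and> cmod (f (cis wp)) = 1 \<and> f (cis wp) = cis tp}"

definition AP :: "(complex \<Rightarrow> complex) set" where
  "AP = {f. RH_inf f \<and> (\<forall>w. cmod (f (cis w)) = 1)}"

definition AP_at :: "real \<Rightarrow> real \<Rightarrow> (complex \<Rightarrow> complex) set" where
  "AP_at wp tp = AP \<inter> RF wp tp"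

end

theory Submission
  imports Defs "HOL-Complex_Analysis.Complex_Analysis"
begin

lemma Re_pos_not_nonpos: "Re z > 0 \<Longrightarrow> z \<notin> \<real>\<^sub>\<le>\<^sub>0"
  by (auto elim!: nonpos_Reals_cases)

lemma phase_deriv_eq:
  fixes f R :: "complex \<Rightarrow> complex"
  assumes fR: "\<And>t. f (cis t) = R (cis t)"
    and Rc: "\<And>t. isCont R (cis t)"
    and RD: "(R has_field_derivative D) (at (cis w))"
    and R0: "R (cis w) \<noteq> 0"
  shows "phase_deriv f w = Re (cis w * D / R (cis w))"
proof -
  define c0 where "c0 = R (cis w)"
  define U where "U t = R (cis t) / c0" for t
  have c0: "c0 \<noteq> 0" using R0 by (simp add: c0_def)
  have Rcis: "isCont (\<lambda>t. R (cis t)) t" for t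
  proof -
    have ce: "cis = (\<lambda>t. exp (\<i> * of_real t))" by (rule ext) (simp add: cis_conv_exp)
    have "isCont cis t" unfolding ce by (intro continuous_intros)
    then show ?thesis by (rule isCont_o2[where f=cis, OF _ Rc])
  qed
  have Uc: "isCont U t" for t
    unfolding U_def using Rcis c0 by (intro continuous_intros) auto
  have Uw: "U w = 1" using c0 by (simp add: U_def c0_def)
  obtain e where e0: "e > 0" and e: "\<And>t. \<bar>t - w\<bar> < e \<Longrightarrow> norm (U t - 1) < 1"
    using Uc[of w] unfolding continuous_at_eps_delta
    by (metis Uw dist_norm dist_real_def zero_less_one)
  have Ure: "Re (U t) > 0" if "\<bar>t - w\<bar> < e" for t
  proof -
    have "\<bar>Re (U t - 1)\<bar> < 1" using e[OF that] abs_Re_le_cmod le_less_trans by blast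
    then show ?thesis by simp
  qed
  have Uslit: "U t \<notin> \<real>\<^sub>\<le>\<^sub>0" if "\<bar>t - w\<bar> < e" for t
    using Ure[OF that] Re_pos_not_nonpos by blast
  have Unz: "U t \<noteq> 0" if "\<bar>t - w\<bar> < e" for t
    using Ure[OF that] by auto
  define \<theta> where "\<theta> t = Arg c0 + Im (Ln (U t))" for t
  have rep: "f (cis t) = of_real (cmod (f (cis t))) * cis (\<theta> t)" if "\<bar>t - w\<bar> < e" for t
  proof -
    have fe: "f (cis t) = c0 * U t" using c0 by (simp add: fR U_def)
    have c0e: "c0 = of_real (cmod c0) * cis (Arg c0)"
      using c0 by (simp add: cis_Arg complex_sgn_def scaleR_conv_of_real)
    have Ue: "U t = of_real (cmod (U t)) * cis (Im (Ln (U t)))"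
      using exp_Ln[OF Unz[OF that]] exp_eq_polar[of "Ln (U t)"] norm_exp_eq_Re[of "Ln (U t)"]
      by metis
    have "f (cis t) = of_real (cmod c0) * of_real (cmod (U t)) * (cis (Arg c0) * cis (Im (Ln (U t))))"
      using fe c0e Ue by (metis mult.assoc mult.left_commute)
    also have "\<dots> = of_real (cmod (f (cis t))) * cis (\<theta> t)"
      by (simp add: fe norm_mult cis_mult \<theta>_def)
    finally show ?thesis .
  qed
  have \<theta>cont: "continuous_on {w - e<..<w + e} \<theta>"
  proof (intro continuous_at_imp_continuous_on ballI)
    fix t assume "t \<in> {w - e<..<w + e}"
    then have "\<bar>t - w\<bar> < e" by auto
    then have "isCont (\<lambda>t. Ln (U t)) t" using isCont_Ln'[OF Uc Uslit] by blast
    then have "isCont (\<lambda>t. Im (Ln (U t))) t" by (rule continuous_Im)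
    then show "isCont \<theta> t" unfolding \<theta>_def by (intro continuous_intros)
  qed
  define H where "H x = Ln (R (exp (\<i> * x)) / c0)" for x :: complex
  have expd: "((\<lambda>x. exp (\<i> * x)) has_field_derivative \<i> * cis w) (at (of_real w))"
    by (auto intro!: derivative_eq_intros simp: cis_conv_exp)
  have Rd2: "((\<lambda>x. R (exp (\<i> * x))) has_field_derivative D * (\<i> * cis w)) (at (of_real w))"
    using DERIV_chain2[of R D "\<lambda>x. exp (\<i> * x)", OF _ expd] RD by (simp add: cis_conv_exp)
  have Hd: "(H has_field_derivative D * (\<i> * cis w) / c0) (at (of_real w))"
  proof -
    have "((\<lambda>x. R (exp (\<i> * x)) / c0) has_field_derivative D * (\<i> * cis w) / c0) (at (of_real w))"
      using Rd2 c0 by (auto intro!: derivative_eq_intros)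
    moreover have one: "R (exp (\<i> * of_real w)) / c0 = 1" using c0 by (simp add: c0_def cis_conv_exp[symmetric])
    moreover have "(Ln has_field_derivative inverse 1) (at (R (exp (\<i> * of_real w)) / c0))"
      unfolding one by (rule has_field_derivative_Ln) (simp add: Re_pos_not_nonpos)
    ultimately show ?thesis unfolding H_def
      using DERIV_chain2[of Ln "inverse 1"] by fastforce
  qed
  have HU: "H (of_real t) = Ln (U t)" for t by (simp add: H_def U_def cis_conv_exp)
  have \<theta>d: "(\<theta> has_real_derivative Re (cis w * D / c0)) (at w)"
  proof -
    have "((\<lambda>t. H (of_real t)) has_vector_derivative D * (\<i> * cis w) / c0) (at w)"
      by (rule has_vector_derivative_real_field[OF Hd])
    from has_field_derivative_Im[OF this]
    have "((\<lambda>t. Im (Ln (U t))) has_real_derivative Im (D * (\<i> * cis w) / c0)) (at w)"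
      unfolding HU .
    from DERIV_add[OF DERIV_const[of "Arg c0"] this]
    have "(\<theta> has_real_derivative Im (D * (\<i> * cis w) / c0)) (at w)"
      unfolding \<theta>_def by simp
    moreover have "Im (D * (\<i> * cis w) / c0) = Re (cis w * D / c0)"
    proof -
      have "D * (\<i> * cis w) / c0 = \<i> * (cis w * D / c0)" by (simp add: field_simps)
      then show ?thesis by (metis Im_i_times)
    qed
    ultimately show ?thesis by simp
  qed
  define P where "P d \<longleftrightarrow> (\<exists>\<theta> e. e > 0 \<and> continuous_on {w - e<..<w + e} \<theta> \<and>
     (\<forall>t. \<bar>t - w\<bar> < e \<longrightarrow> f (cis t) = complex_of_real (cmod (f (cis t))) * cis (\<theta> t)) \<and>
     (\<theta> has_real_derivative d) (at w))" for d
  have Pd: "P (Re (cis w * D / c0))"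
    unfolding P_def using e0 \<theta>cont rep \<theta>d by blast
  have uniq: "d2 = Re (cis w * D / c0)" if "P d2" for d2
  proof -
    from that obtain \<theta>2 e2 where e2: "e2 > 0"
      and rep2: "\<And>t. \<bar>t - w\<bar> < e2 \<Longrightarrow> f (cis t) = complex_of_real (cmod (f (cis t))) * cis (\<theta>2 t)"
      and d2: "(\<theta>2 has_real_derivative d2) (at w)"
      unfolding P_def by blast
    define \<delta> where "\<delta> t = \<theta>2 t - \<theta> t" for t
    have \<delta>c: "isCont \<delta> w" unfolding \<delta>_def
      using DERIV_isCont[OF d2] DERIV_isCont[OF \<theta>d] by (intro continuous_intros)
    have int: "\<exists>k::int. \<delta> t = of_int k * 2 * pi" if "\<bar>t - w\<bar> < min e e2" for t
    proof -
      have "f (cis t) \<noteq> 0" using Unz[of t] that c0 by (simp add: fR U_def)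
      then have "cis (\<theta>2 t) = cis (\<theta> t)"
        using rep[of t] rep2[of t] that by (metis min_less_iff_conj mult_cancel_left of_real_eq_0_iff norm_eq_zero)
      then have "cis (\<delta> t) = 1" by (simp add: \<delta>_def cis_divide[symmetric])
      then have "cos (\<delta> t) = 1" by (metis cis.sel(1) one_complex.sel(1))
      then show ?thesis using cos_one_2pi_int by blast
    qed
    obtain e3 where e3: "e3 > 0" "\<And>t. \<bar>t - w\<bar> < e3 \<Longrightarrow> \<bar>\<delta> t - \<delta> w\<bar> < 2 * pi"
      using \<delta>c unfolding continuous_at_eps_delta by (metis dist_real_def pi_gt_zero zero_less_mult_iff zero_less_numeral)
    have const: "\<delta> t = \<delta> w" if tw: "\<bar>t - w\<bar> < min (min e e2) e3" for t
    proof -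
      obtain k where k: "\<delta> t = of_int k * 2 * pi" using int[of t] tw by auto
      obtain k0 where k0: "\<delta> w = of_int k0 * 2 * pi" using int[of w] e0 e2 by auto
      have "\<bar>of_int k * 2 * pi - of_int k0 * 2 * pi\<bar> < 2 * pi" using e3(2)[of t] tw k k0 by auto
      moreover have "of_int k * 2 * pi - of_int k0 * 2 * pi = real_of_int (k - k0) * (2*pi)"
        by (simp add: algebra_simps)
      ultimately have "\<bar>real_of_int (k - k0) * (2 * pi)\<bar> < 2 * pi"
        by metis
      then have "\<bar>real_of_int (k - k0)\<bar> * (2 * pi) < 1 * (2 * pi)"
        by (simp only: abs_mult abs_of_pos[OF pi_gt_zero] abs_of_pos[of "2*pi"])
      then have "\<bar>real_of_int (k - k0)\<bar> < 1" by (rule mult_right_less_imp_less) simp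
      then have "k = k0" by linarith
      then show ?thesis using k k0 by simp
    qed
    have "((\<lambda>t. \<theta> t + \<delta> w) has_real_derivative Re (cis w * D / c0)) (at w)"
      using \<theta>d by (auto intro!: derivative_eq_intros)
    then have "(\<theta>2 has_real_derivative Re (cis w * D / c0)) (at w)"
    proof (rule has_field_derivative_transform_within[where d="min (min e e2) e3" and S=UNIV])
      show "0 < min (min e e2) e3" using e0 e2 e3(1) by simp
      show "w \<in> UNIV" by simp
      fix x assume "x \<in> UNIV" "dist x w < min (min e e2) e3"
      then have "\<delta> x = \<delta> w" using const[of x] by (simp add: dist_real_def)
      then show "\<theta> x + \<delta> w = \<theta>2 x" by (simp add: \<delta>_def)
    qed
    then show ?thesis using DERIV_unique d2 by blast
  qed
  have "phase_deriv f w = (THE d. P d)" unfolding phase_deriv_def P_def by simp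
  also have "\<dots> = Re (cis w * D / c0)" using Pd uniq by (rule the_equality)
  finally show ?thesis by (simp add: c0_def)
qed

lemma moebius_den_nz:
  assumes "cmod a < 1" "cmod b < 1"
  shows "1 - cnj a * b \<noteq> 0"
proof
  assume "1 - cnj a * b = 0"
  then have "cmod (cnj a * b) = 1" by (metis eq_iff_diff_eq_0 norm_one)
  moreover have "cmod a * cmod b < 1 * 1" by (rule mult_strict_mono') (use assms in auto)
  then have "cmod (cnj a * b) < 1" by (simp add: norm_mult)
  ultimately show False by simp
qed

lemma moebius_identity:
  assumes a: "cmod a < 1" and b: "cmod b < 1"
  shows "1 - cmod (Moebius_function 0 a b) ^ 2 =
         (1 - cmod a ^ 2) * (1 - cmod b ^ 2) / cmod (1 - cnj a * b) ^ 2"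
proof -
  have "1 - cnj a * b \<noteq> 0" using moebius_den_nz[OF a b] .
  then have VV: "1 - a * cnj b \<noteq> 0"
    by (metis complex_cnj_cnj complex_cnj_mult complex_cnj_one right_minus_eq)
  show ?thesis
    using \<open>1 - cnj a * b \<noteq> 0\<close> VV
    apply (cases a)
    apply (cases b)
    apply (simp add: Moebius_function_def divide_simps norm_divide norm_mult)
    apply (simp add: complex_norm complex_diff complex_mult one_complex.code complex_cnj)
    apply (auto simp: algebra_simps power2_eq_square)
    done
qed

lemma schwarz_pick:
  assumes hol: "g holomorphic_on ball 0 1" and lt: "\<And>z. cmod z < 1 \<Longrightarrow> cmod (g z) < 1"
    and z1: "cmod z1 < 1" and z2: "cmod z2 < 1"
  shows "cmod (Moebius_function 0 (g z1) (g z2)) \<le> cmod (Moebius_function 0 z1 z2)"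
proof -
  define h where "h = Moebius_function 0 (g z1) \<circ> (g \<circ> Moebius_function 0 (-z1))"
  have m1: "Moebius_function 0 (-z1) holomorphic_on ball 0 1"
    using Moebius_function_holomorphic z1 by simp
  have m1b: "Moebius_function 0 (-z1) ` ball 0 1 \<subseteq> ball 0 1"
    using Moebius_function_norm_lt_1 z1 by auto
  have gb: "g ` ball 0 1 \<subseteq> ball 0 1" using lt by auto
  have m2: "Moebius_function 0 (g z1) holomorphic_on ball 0 1"
    using Moebius_function_holomorphic lt z1 by simp
  have "(g \<circ> Moebius_function 0 (-z1)) holomorphic_on ball 0 1"
    by (rule holomorphic_on_compose_gen[OF m1 hol m1b])
  moreover have "(g \<circ> Moebius_function 0 (-z1)) ` ball 0 1 \<subseteq> ball 0 1"
    using m1b gb by (auto simp: image_subset_iff)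
  ultimately have holh: "h holomorphic_on ball 0 1"
    unfolding h_def by (rule holomorphic_on_compose_gen[OF _ m2])
  have h0: "h 0 = 0"
    by (simp add: h_def Moebius_function_of_zero Moebius_function_eq_zero)
  have hlt: "cmod (h z) < 1" if "cmod z < 1" for z
  proof -
    have "cmod (Moebius_function 0 (-z1) z) < 1" using Moebius_function_norm_lt_1 z1 that by simp
    then have "cmod (g (Moebius_function 0 (-z1) z)) < 1" by (rule lt)
    then show ?thesis unfolding h_def o_def
      using Moebius_function_norm_lt_1 lt[OF z1] by blast
  qed
  have \<xi>: "cmod (Moebius_function 0 z1 z2) < 1" using Moebius_function_norm_lt_1 z1 z2 by blast
  have "cmod (h (Moebius_function 0 z1 z2)) \<le> cmod (Moebius_function 0 z1 z2)"
    using Schwarz_Lemma(1)[OF holh h0 hlt \<xi>] by simp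
  moreover have "Moebius_function 0 (-z1) (Moebius_function 0 z1 z2) = z2"
    by (rule Moebius_function_compose) (use z1 z2 in auto)
  ultimately show ?thesis by (simp add: h_def)
qed

lemma pick_sym:
  assumes hol: "g holomorphic_on ball 0 1" and lt: "\<And>z. cmod z < 1 \<Longrightarrow> cmod (g z) < 1"
    and z: "cmod z < 1" and sym: "g (cnj z) = cnj (g z)"
  shows "(1 - cmod z ^ 2) * cmod (1 - (g z) ^ 2) \<le> (1 - cmod (g z) ^ 2) * cmod (1 - z ^ 2)"
proof -
  define w where "w = g z"
  have w: "cmod w < 1" using lt[OF z] by (simp add: w_def)
  have cz: "cmod (cnj z) < 1" using z by simp
  have cw: "cmod (cnj w) < 1" using w by simp
  have "cmod (Moebius_function 0 w (cnj w)) \<le> cmod (Moebius_function 0 z (cnj z))"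
    using schwarz_pick[OF hol lt z cz] sym by (simp add: w_def)
  then have "cmod (Moebius_function 0 w (cnj w)) ^ 2 \<le> cmod (Moebius_function 0 z (cnj z)) ^ 2"
    by (rule power_mono) simp
  then have "1 - cmod (Moebius_function 0 z (cnj z)) ^ 2 \<le> 1 - cmod (Moebius_function 0 w (cnj w)) ^ 2"
    by simp
  moreover have "cmod (1 - cnj z * cnj z) = cmod (1 - z ^ 2)"
    by (metis complex_cnj_mult complex_cnj_one complex_cnj_diff complex_mod_cnj power2_eq_square)
  moreover have "cmod (1 - cnj w * cnj w) = cmod (1 - w ^ 2)"
    by (metis complex_cnj_mult complex_cnj_one complex_cnj_diff complex_mod_cnj power2_eq_square)
  ultimately have ineq: "(1 - cmod z ^ 2)^2 / cmod (1 - z ^ 2) ^ 2 \<le> (1 - cmod w ^ 2)^2 / cmod (1 - w ^ 2) ^ 2"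
    using moebius_identity[OF z cz] moebius_identity[OF w cw] by (simp add: power2_eq_square)
  have nz: "1 - x ^ 2 \<noteq> 0" if "cmod x < 1" for x :: complex
  proof
    assume "1 - x ^ 2 = 0"
    then have "cmod (x ^ 2) = 1" by (metis eq_iff_diff_eq_0 norm_one)
    moreover have "cmod (x^2) < 1" using that by (simp add: norm_power power_less_one_iff)
    ultimately show False by simp
  qed
  have Bz: "cmod (1 - z ^ 2) > 0" using nz[OF z] by simp
  have Bw: "cmod (1 - w ^ 2) > 0" using nz[OF w] by simp
  have "(1 - cmod z ^ 2)^2 * cmod (1 - w ^ 2)^2 \<le> (1 - cmod w ^ 2)^2 * cmod (1 - z ^ 2)^2"
    using ineq Bz Bw by (simp add: field_simps)
  then have "((1 - cmod z ^ 2) * cmod (1 - w ^ 2))^2 \<le> ((1 - cmod w ^ 2) * cmod (1 - z ^ 2))^2"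
    by (simp only: power_mult_distrib)
  moreover have "0 \<le> (1 - cmod w ^ 2) * cmod (1 - z ^ 2)"
    using w by (simp add: abs_square_less_1 less_imp_le)
  ultimately show ?thesis unfolding w_def[symmetric] by (rule power2_le_imp_le)
qed

lemma real_unimod_sq:
  assumes "cnj x = x" "cmod x = 1"
  shows "x ^ 2 = 1"
proof -
  have "x = of_real (Re x)" using assms(1) by (metis Reals_cnj_iff complex_is_Real_iff of_real_Re)
  moreover then have "\<bar>Re x\<bar> = 1" using assms(2) by (metis norm_of_real)
  ultimately show ?thesis by (metis (no_types, lifting) abs_square_eq_1 of_real_eq_1_iff of_real_power)
qed

lemma interior_ineq:
  assumes S: "open S" "cball 0 1 \<subseteq> S" and hol: "g holomorphic_on S"
    and le1: "\<And>z. cmod z \<le> 1 \<Longrightarrow> cmod (g z) \<le> 1"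
    and sym: "\<And>z. z \<noteq> 0 \<Longrightarrow> cmod z < 1 \<Longrightarrow> g (cnj z) = cnj (g z)"
    and z: "cmod z < 1" "z \<noteq> 0"
  shows "(1 - cmod z ^ 2) * cmod (1 - (g z) ^ 2) \<le> (1 - cmod (g z) ^ 2) * cmod (1 - z ^ 2)"
proof (cases "\<forall>u. cmod u < 1 \<longrightarrow> cmod (g u) < 1")
  case True
  have "g holomorphic_on ball 0 1" using hol S by (meson ball_subset_cball holomorphic_on_subset subset_trans)
  then show ?thesis using pick_sym True z sym by blast
next
  case False
  then obtain u where u: "cmod u < 1" "cmod (g u) \<ge> 1" by auto
  then have gu: "cmod (g u) = 1" using le1[of u] by simp
  have "g holomorphic_on ball 0 1" using hol S by (meson ball_subset_cball holomorphic_on_subset subset_trans)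
  moreover have "\<And>v. v \<in> ball 0 1 \<Longrightarrow> cmod (g v) \<le> cmod (g u)" using le1 gu by simp
  ultimately have "g constant_on ball 0 1"
    using maximum_modulus_principle[of g "ball 0 1" "ball 0 1" u] u by auto
  then obtain k where k: "\<And>v. v \<in> ball 0 1 \<Longrightarrow> g v = k" unfolding constant_on_def by auto
  have "g z = k" "g (cnj z) = k" using k z by auto
  then have "cnj (g z) = g z" using sym z by metis
  moreover have "cmod (g z) = 1" using k z u gu by auto
  ultimately have "(g z)^2 = 1" by (rule real_unimod_sq)
  then show ?thesis using \<open>cmod (g z) = 1\<close> by simp
qed

lemma boundary_julia:
  assumes S: "open S" "cball 0 1 \<subseteq> S" and hol: "g holomorphic_on S"
    and le1: "\<And>z. cmod z \<le> 1 \<Longrightarrow> cmod (g z) \<le> 1"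
    and sym: "\<And>z. z \<noteq> 0 \<Longrightarrow> cmod z < 1 \<Longrightarrow> g (cnj z) = cnj (g z)"
    and \<zeta>: "cmod \<zeta> = 1" and c: "cmod (g \<zeta>) = 1"
  shows "0 \<le> Re (\<zeta> * deriv g \<zeta> * cnj (g \<zeta>))"
    and "cmod (1 - (g \<zeta>) ^ 2) \<le> Re (\<zeta> * deriv g \<zeta> * cnj (g \<zeta>)) * cmod (1 - \<zeta> ^ 2)"
proof -
  define c where "c = g \<zeta>"
  define g' where "g' = deriv g \<zeta>"
  define X where "X = Re (\<zeta> * g' * cnj c)"
  define w where "w r = g (of_real r * \<zeta>)" for r :: real
  define D where "D r = (c - w r) / of_real (1 - r)" for r :: real
  have \<zeta>S: "\<zeta> \<in> S" using S \<zeta> by auto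
  have \<zeta>0: "\<zeta> \<noteq> 0" using \<zeta> by auto
  have gd: "(g has_field_derivative g') (at \<zeta>)"
    unfolding g'_def by (rule holomorphic_derivI[OF hol S(1) \<zeta>S])
  have ev01: "\<forall>\<^sub>F r in at_left 1. r \<in> {0<..<1::real}"
    by (rule eventually_at_left_real) simp
  have phi: "filterlim (\<lambda>r::real. of_real r * \<zeta>) (at \<zeta>) (at_left 1)"
  proof (rule filterlim_atI)
    have "((\<lambda>r::real. of_real r * \<zeta>) \<longlongrightarrow> of_real 1 * \<zeta>) (at_left 1)"
      by (intro tendsto_intros)
    then show "((\<lambda>r::real. of_real r * \<zeta>) \<longlongrightarrow> \<zeta>) (at_left 1)" by simp
    show "\<forall>\<^sub>F r in at_left 1. of_real r * \<zeta> \<noteq> \<zeta>"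
      using ev01 by eventually_elim (use \<zeta>0 in auto)
  qed
  have dq: "((\<lambda>y. (g y - g \<zeta>) / (y - \<zeta>)) \<longlongrightarrow> g') (at \<zeta>)"
    using gd by (simp add: has_field_derivative_iff)
  have lim1: "((\<lambda>r. (g (of_real r * \<zeta>) - g \<zeta>) / (of_real r * \<zeta> - \<zeta>)) \<longlongrightarrow> g') (at_left 1)"
    using filterlim_compose[OF dq phi] by simp
  have limD: "(D \<longlongrightarrow> \<zeta> * g') (at_left 1)"
  proof -
    have "((\<lambda>r. \<zeta> * ((g (of_real r * \<zeta>) - g \<zeta>) / (of_real r * \<zeta> - \<zeta>))) \<longlongrightarrow> \<zeta> * g') (at_left 1)"
      by (intro tendsto_intros lim1)
    moreover have "\<forall>\<^sub>F r in at_left 1. \<zeta> * ((g (of_real r * \<zeta>) - g \<zeta>) / (of_real r * \<zeta> - \<zeta>)) = D r"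
      using ev01
    proof eventually_elim
      case (elim r)
      then have r1: "of_real r - (1::complex) \<noteq> 0" by (metis greaterThanLessThan_iff less_irrefl of_real_1 of_real_eq_iff right_minus_eq)
      have "of_real r * \<zeta> - \<zeta> = (of_real r - 1) * \<zeta>" by (simp add: algebra_simps)
      then show ?case using r1 \<zeta>0 by (simp add: D_def w_def c_def field_simps)
    qed
    ultimately show ?thesis by (rule Lim_transform_eventually)
  qed
  have contg: "isCont g \<zeta>" by (rule DERIV_isCont[OF gd])
  have limw: "(w \<longlongrightarrow> c) (at_left 1)"
  proof -
    have "((\<lambda>r::real. of_real r * \<zeta>) \<longlongrightarrow> of_real 1 * \<zeta>) (at_left 1)"
      by (intro tendsto_intros)
    then have "((\<lambda>r::real. of_real r * \<zeta>) \<longlongrightarrow> \<zeta>) (at_left 1)" by simp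
    from isCont_tendsto_compose[OF contg this] show ?thesis unfolding w_def c_def .
  qed
  define Q where "Q r = (1 - cmod (w r) ^ 2) / (1 - r)" for r
  have QD: "\<forall>\<^sub>F r in at_left 1. Q r = Re (D r * cnj c + w r * cnj (D r))"
    using ev01
  proof eventually_elim
    case (elim r)
    then have r1: "1 - r \<noteq> 0" by simp
    have "D r * cnj c + w r * cnj (D r) = ((c - w r) * cnj c + w r * cnj (c - w r)) / of_real (1 - r)"
    proof -
      have cD: "cnj (D r) = cnj (c - w r) / of_real (1 - r)" by (simp add: D_def)
      show ?thesis unfolding cD unfolding D_def
        by (simp only: times_divide_eq_left times_divide_eq_right add_divide_distrib[symmetric])
    qed
    also have "(c - w r) * cnj c + w r * cnj (c - w r) = c * cnj c - w r * cnj (w r)"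
      by (simp add: algebra_simps)
    also have "\<dots> = of_real (1 - cmod (w r) ^ 2)"
      using c unfolding c_def by (simp add: complex_norm_square[symmetric] del: of_real_power)
    finally show ?case by (simp add: Q_def)
  qed
  have limQ: "(Q \<longlongrightarrow> 2 * X) (at_left 1)"
  proof -
    have "((\<lambda>r. Re (D r * cnj c + w r * cnj (D r))) \<longlongrightarrow> Re (\<zeta> * g' * cnj c + c * cnj (\<zeta> * g'))) (at_left 1)"
      by (intro tendsto_intros limD limw)
    moreover have "Re (\<zeta> * g' * cnj c + c * cnj (\<zeta> * g')) = 2 * X"
      unfolding X_def by (simp add: algebra_simps)
    ultimately have "((\<lambda>r. Re (D r * cnj c + w r * cnj (D r))) \<longlongrightarrow> 2 * X) (at_left 1)" by simp
    then show ?thesis using QD by (rule Lim_transform_eventually[OF _ eventually_mono]) auto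
  qed
  have wle: "cmod (w r) \<le> 1" if "r \<in> {0<..<1}" for r
    unfolding w_def using that \<zeta> by (intro le1) (simp add: norm_mult)
  have "\<forall>\<^sub>F r in at_left 1. 0 \<le> Q r"
    using ev01
  proof eventually_elim
    case (elim r)
    then have "cmod (w r) ^ 2 \<le> 1" using wle[OF elim] by (simp add: power_le_one)
    then show ?case using elim by (simp add: Q_def)
  qed
  from tendsto_le[OF trivial_limit_at_left_real limQ tendsto_const this]
  show "0 \<le> Re (\<zeta> * deriv g \<zeta> * cnj (g \<zeta>))" by (simp add: X_def g'_def c_def)
  have "\<forall>\<^sub>F r in at_left 1. (1 + r) * cmod (1 - (w r) ^ 2) \<le> Q r * cmod (1 - (of_real r * \<zeta>) ^ 2)"
    using ev01
  proof eventually_elim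
    case (elim r)
    have z: "cmod (of_real r * \<zeta>) < 1" "of_real r * \<zeta> \<noteq> 0" using elim \<zeta> \<zeta>0 by (auto simp: norm_mult)
    have "(1 - cmod (of_real r * \<zeta>) ^ 2) * cmod (1 - (w r) ^ 2) \<le> (1 - cmod (w r) ^ 2) * cmod (1 - (of_real r * \<zeta>) ^ 2)"
      using interior_ineq[OF S hol le1 sym z] by (simp add: w_def)
    moreover have "cmod (of_real r * \<zeta>) ^ 2 = r ^ 2" using elim \<zeta> by (simp add: norm_mult)
    ultimately have "(1 - r ^ 2) * cmod (1 - (w r) ^ 2) \<le> (1 - cmod (w r) ^ 2) * cmod (1 - (of_real r * \<zeta>) ^ 2)"
      by simp
    then have "(1 - r ^ 2) * cmod (1 - (w r) ^ 2) / (1 - r) \<le> (1 - cmod (w r) ^ 2) * cmod (1 - (of_real r * \<zeta>) ^ 2) / (1 - r)"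
      using elim by (intro divide_right_mono) auto
    moreover have "(1 - r ^ 2) * cmod (1 - (w r) ^ 2) / (1 - r) = (1 + r) * cmod (1 - (w r) ^ 2)"
      using elim by (simp add: power2_eq_square field_simps)
    moreover have "(1 - cmod (w r) ^ 2) * cmod (1 - (of_real r * \<zeta>) ^ 2) / (1 - r) = Q r * cmod (1 - (of_real r * \<zeta>) ^ 2)"
      by (simp add: Q_def)
    ultimately show ?case by simp
  qed
  moreover have "((\<lambda>r. (1 + r) * cmod (1 - (w r) ^ 2)) \<longlongrightarrow> (1 + 1) * cmod (1 - c ^ 2)) (at_left 1)"
    by (intro tendsto_intros limw)
  moreover have "((\<lambda>r. Q r * cmod (1 - (of_real r * \<zeta>) ^ 2)) \<longlongrightarrow> (2 * X) * cmod (1 - (of_real 1 * \<zeta>) ^ 2)) (at_left 1)"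
    by (intro tendsto_intros limQ)
  ultimately have "(1 + 1) * cmod (1 - c ^ 2) \<le> (2 * X) * cmod (1 - (of_real 1 * \<zeta>) ^ 2)"
    by (intro tendsto_le[OF trivial_limit_at_left_real]) auto
  then have "cmod (1 - c ^ 2) \<le> X * cmod (1 - \<zeta> ^ 2)" by simp
  then show "cmod (1 - (g \<zeta>) ^ 2) \<le> Re (\<zeta> * deriv g \<zeta> * cnj (g \<zeta>)) * cmod (1 - \<zeta> ^ 2)"
    unfolding X_def g'_def c_def .
qed

lemma norm_1_minus_cis_sq: "cmod (1 - cis a ^ 2) = 2 * \<bar>sin a\<bar>"
proof -
  have "cis a * cis (-a) = 1" by (simp add: cis_mult)
  then have "1 - cis a ^ 2 = cis a * (cis (-a) - cis a)" by (simp add: power2_eq_square algebra_simps)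
  moreover have "cis (-a) - cis a = - (2 * \<i> * of_real (sin a))" by (simp add: complex_eq_iff)
  ultimately have "cmod (1 - cis a ^ 2) = cmod (2 * \<i> * of_real (sin a))" by (simp add: norm_mult)
  also have "\<dots> = 2 * \<bar>sin a\<bar>" by (simp add: norm_mult)
  finally show ?thesis .
qed

lemma poly_holo: "(\<lambda>z. poly p z) holomorphic_on A"
  using poly_holomorphic_on[OF holomorphic_on_id] by (simp add: id_def)

lemma poly_cont: "continuous_on A (\<lambda>z::complex. poly p z)"
  using holomorphic_on_imp_continuous_on[OF poly_holo] .

lemma RF_bound:
  fixes f :: "complex \<Rightarrow> complex"
  assumes RH: "RH_inf f" and le: "\<And>t. cmod (f (cis t)) \<le> 1"
    and val: "f (cis w) = cis tp" and w: "0 \<le> w" "w \<le> pi"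
  shows "phase_deriv f w \<le> - \<bar>sin tp\<bar> / sin w"
proof -
  obtain p q :: "real poly" where q0: "q \<noteq> 0" and dpq: "degree p \<le> degree q"
    and roots: "\<And>z. poly (map_poly complex_of_real q) z = 0 \<Longrightarrow> norm z < 1"
    and fpq: "\<And>z. poly (map_poly complex_of_real q) z \<noteq> 0 \<Longrightarrow>
        f z = poly (map_poly complex_of_real p) z / poly (map_poly complex_of_real q) z"
    using RH unfolding RH_inf_def by blast
  define P where "P = map_poly complex_of_real p"
  define Q where "Q = map_poly complex_of_real q"
  define n where "n = degree Q"
  have dP: "degree P = degree p" unfolding P_def by (rule degree_map_poly) simp
  have dQ: "degree Q = degree q" unfolding Q_def by (rule degree_map_poly) simp
  have Q0: "Q \<noteq> 0" using q0 unfolding Q_def by (metis dQ degree_0 lead_coeff_map_poly_nz leading_coeff_0_iff of_real_eq_0_iff coeff_map_poly of_real_0)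
  define Pr where "Pr = monom 1 (n - degree P) * reflect_poly P"
  define Qr where "Qr = reflect_poly Q"
  define g where "g z = poly Pr z / poly Qr z" for z
  define S where "S = {z. poly Qr z \<noteq> 0}"
  have polyQr: "poly Qr z = z ^ n * poly Q (inverse z)" if "z \<noteq> 0" for z
    using that by (simp add: Qr_def n_def poly_reflect_poly_nz)
  have polyPr: "poly Pr z = z ^ n * poly P (inverse z)" if "z \<noteq> 0" for z
  proof -
    have "degree P \<le> n" using dP dQ dpq by (simp add: n_def)
    then have "z ^ (n - degree P) * z ^ degree P = z ^ n" by (simp add: power_add[symmetric])
    then show ?thesis using that by (simp add: Pr_def poly_monom poly_reflect_poly_nz mult.assoc[symmetric])
  qed
  have Qr_nz: "poly Qr z \<noteq> 0" if "cmod z \<le> 1" for z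
  proof (cases "z = 0")
    case True then show ?thesis using Q0 by (simp add: Qr_def)
  next
    case False
    show ?thesis
    proof
      assume "poly Qr z = 0"
      then have "poly Q (inverse z) = 0" using polyQr[OF False] False by simp
      then have "cmod (inverse z) < 1" using roots unfolding Q_def by blast
      then have "1 < cmod z" using False by (simp add: norm_inverse inverse_less_1_iff)
      then show False using that by simp
    qed
  qed
  have gP: "g z = poly P (inverse z) / poly Q (inverse z)" if "z \<noteq> 0" for z
    using that by (simp add: g_def polyQr polyPr)
  have Sopen: "open S" unfolding S_def by (intro open_Collect_neq poly_cont continuous_on_const)
  have Scb: "cball 0 1 \<subseteq> S" unfolding S_def using Qr_nz by auto
  have hol: "g holomorphic_on S" unfolding g_def S_def by (intro holomorphic_intros poly_holo) auto
  have fg: "f (cis t) = g (cis (-t))" for t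
  proof -
    have "poly Q (cis t) \<noteq> 0" using roots[of "cis t"] by (auto simp: Q_def)
    then show ?thesis using fpq[of "cis t"] gP[of "cis (-t)"] by (simp add: P_def Q_def inverse_eq_divide cis_divide[symmetric] flip: cis_inverse)
  qed
  have gS: "g holomorphic_on ball 0 1" using hol Scb by (meson ball_subset_cball holomorphic_on_subset subset_trans)
  have le1: "cmod (g z) \<le> 1" if "cmod z \<le> 1" for z
  proof (rule maximum_modulus_frontier[of g "cball 0 1"])
    show "g holomorphic_on interior (cball 0 1)" using gS by simp
    show "continuous_on (closure (cball 0 1)) g"
      using holomorphic_on_imp_continuous_on[OF hol] Scb by (simp add: continuous_on_subset)
    show "bounded (cball (0::complex) 1)" by simp
    show "z \<in> cball 0 1" using that by simp
    fix u :: complex assume "u \<in> frontier (cball 0 1)"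
    then have u: "cmod u = 1" by (simp add: frontier_cball)
    then have "u = cis (- (- Arg u))" using cis_Arg[of u] by (auto simp: sgn_div_norm) (metis norm_zero zero_neq_one)
    then show "cmod (g u) \<le> 1" using le[of "- Arg u"] fg[of "- Arg u"] by metis
  qed
  have realP: "\<And>i. coeff P i \<in> \<real>" by (simp add: P_def coeff_map_poly)
  have realQ: "\<And>i. coeff Q i \<in> \<real>" by (simp add: Q_def coeff_map_poly)
  have sym: "g (cnj z) = cnj (g z)" if "z \<noteq> 0" "cmod z < 1" for z
  proof -
    have "g (cnj z) = poly P (cnj (inverse z)) / poly Q (cnj (inverse z))"
      using gP[of "cnj z"] that by (simp add: complex_cnj_inverse)
    also have "\<dots> = cnj (poly P (inverse z)) / cnj (poly Q (inverse z))"
      using poly_cnj_real[OF realP] poly_cnj_real[OF realQ] by metis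
    also have "\<dots> = cnj (g z)" using gP[OF that(1)] by simp
    finally show ?thesis .
  qed
  define \<zeta>1 where "\<zeta>1 = cis (- w)"
  have gz1: "g \<zeta>1 = cis tp" using fg[of w] val by (simp add: \<zeta>1_def)
  have z1: "cmod \<zeta>1 = 1" by (simp add: \<zeta>1_def)
  define X where "X = Re (\<zeta>1 * deriv g \<zeta>1 * cnj (g \<zeta>1))"
  have X0: "0 \<le> X" and Xb: "cmod (1 - (g \<zeta>1) ^ 2) \<le> X * cmod (1 - \<zeta>1 ^ 2)"
    using boundary_julia[OF Sopen Scb hol le1 sym z1] gz1 unfolding X_def by auto
  have phase: "phase_deriv f w = - X"
  proof -
    define R where "R z = g (inverse z)" for z
    have fR: "f (cis t) = R (cis t)" for t using fg[of t] by (simp add: R_def cis_inverse)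
    have gc: "isCont g u" if "u \<in> S" for u
      using holomorphic_on_imp_continuous_on[OF hol] Sopen that by (simp add: continuous_on_eq_continuous_at)
    have Rc: "isCont R (cis t)" for t
    proof -
      have "isCont inverse (cis t)" by (intro continuous_intros) simp
      moreover have "inverse (cis t) \<in> S" using Scb by (auto simp: cis_inverse)
      ultimately show ?thesis unfolding R_def using gc isCont_o2[where f=inverse and g=g] by blast
    qed
    have gd: "(g has_field_derivative deriv g \<zeta>1) (at \<zeta>1)"
    proof -
      have "\<zeta>1 \<in> S" using Scb z1 by auto
      then show ?thesis by (rule holomorphic_derivI[OF hol Sopen])
    qed
    have di: "(inverse has_field_derivative - (inverse (cis w) ^ 2)) (at (cis w))"
      using DERIV_inverse[of "cis w"] by (simp add: power2_eq_square)
    have RD: "(R has_field_derivative deriv g \<zeta>1 * - (inverse (cis w) ^ 2)) (at (cis w))"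
      unfolding R_def using DERIV_chain2[of g "deriv g \<zeta>1" inverse, OF _ di] gd
      by (simp add: \<zeta>1_def cis_inverse)
    have "phase_deriv f w = Re (cis w * (deriv g \<zeta>1 * - (inverse (cis w) ^ 2)) / R (cis w))"
      by (rule phase_deriv_eq[OF fR Rc RD]) (simp add: R_def cis_inverse \<zeta>1_def[symmetric] gz1)
    also have "cis w * (deriv g \<zeta>1 * - (inverse (cis w) ^ 2)) / R (cis w) = - (\<zeta>1 * deriv g \<zeta>1 * cnj (g \<zeta>1))"
    proof -
      have i1: "inverse (cis w) = \<zeta>1" by (simp add: \<zeta>1_def cis_inverse)
      have Rw: "R (cis w) = cis tp" unfolding R_def i1 by (rule gz1)
      have e1: "cis w * \<zeta>1 = 1" by (simp add: \<zeta>1_def cis_mult)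
      have e2: "inverse (cis tp) = cnj (cis tp)" by (simp add: cis_cnj cis_inverse)
      have "cis w * (deriv g \<zeta>1 * - (inverse (cis w) ^ 2)) / R (cis w)
          = - ((cis w * \<zeta>1) * (\<zeta>1 * deriv g \<zeta>1 * inverse (cis tp)))"
        unfolding i1 Rw by (simp add: divide_inverse power2_eq_square algebra_simps)
      also have "\<dots> = - (\<zeta>1 * deriv g \<zeta>1 * cnj (g \<zeta>1))" unfolding e1 e2 gz1 by simp
      finally show ?thesis .
    qed
    finally show ?thesis by (simp add: X_def)
  qed
  have A: "cmod (1 - (cis tp) ^ 2) \<le> X * cmod (1 - (cis (-w)) ^ 2)"
    using Xb unfolding gz1 unfolding \<zeta>1_def .
  have sw: "\<bar>sin (-w)\<bar> = sin w" using sin_ge_zero[OF w] by simp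
  have "2 * \<bar>sin tp\<bar> \<le> X * (2 * sin w)"
    using A unfolding norm_1_minus_cis_sq sw .
  then have sb: "\<bar>sin tp\<bar> \<le> X * sin w" by (simp add: algebra_simps)
  show ?thesis
  proof (cases "sin w = 0")
    case True then show ?thesis using phase X0 by simp
  next
    case False
    then have "sin w > 0" using sin_ge_zero[OF w] by simp
    then have "\<bar>sin tp\<bar> / sin w \<le> X" using sb by (simp add: pos_divide_le_eq)
    then show ?thesis using phase by simp
  qed
qed


lemma isCont_cis: "isCont cis t"
proof -
  have ce: "cis = (\<lambda>t. exp (\<i> * of_real t))" by (rule ext) (simp add: cis_conv_exp)
  show ?thesis unfolding ce by (intro continuous_intros)
qed

lemma RH_circle_bound:
  assumes RH: "RH_inf f" and H: "Hinf_norm f = 1"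
  shows "cmod (f (cis t)) \<le> 1"
proof -
  obtain p q :: "real poly" where
        roots: "\<And>z. poly (map_poly complex_of_real q) z = 0 \<Longrightarrow> norm z < 1"
    and fpq: "\<And>z. poly (map_poly complex_of_real q) z \<noteq> 0 \<Longrightarrow>
        f z = poly (map_poly complex_of_real p) z / poly (map_poly complex_of_real q) z"
    using RH unfolding RH_inf_def by blast
  define P where "P = map_poly complex_of_real p"
  define Q where "Q = map_poly complex_of_real q"
  have Qnz: "poly Q (cis u) \<noteq> 0" for u using roots[of "cis u"] by (auto simp: Q_def)
  define h where "h u = cmod (poly P (cis u) / poly Q (cis u))" for u
  have hf: "h u = cmod (f (cis u))" for u using fpq[of "cis u"] Qnz[of u] by (simp add: h_def P_def Q_def)
  have "continuous_on {-pi..pi} h"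
  proof (intro continuous_at_imp_continuous_on ballI)
    fix u
    have pc: "isCont (\<lambda>u. poly A (cis u)) u" for A :: "complex poly"
      using isCont_o2[OF isCont_cis, where g="poly A"] poly_cont[of UNIV A]
      by (simp add: continuous_on_eq_continuous_at)
    show "isCont h u" unfolding h_def using pc[of P] pc[of Q] Qnz[of u] by (intro continuous_intros) (auto simp: isCont_cis)
  qed
  then have "compact (h ` {-pi..pi})" by (intro compact_continuous_image) auto
  then have "bdd_above (h ` {-pi..pi})" by (intro bounded_imp_bdd_above compact_imp_bounded)
  then have bdd: "bdd_above ((\<lambda>w. cmod (f (cis w))) ` {-pi<..pi})"
    by (rule bdd_above_mono) (auto simp: hf)
  have "cis t \<noteq> 0" by simp
  then have ca: "cis (Arg (cis t)) = cis t" by (simp add: cis_Arg sgn_div_norm)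
  have "Arg (cis t) \<in> {-pi<..pi}" using Arg_bounded[of "cis t"] by auto
  then have "cmod (f (cis (Arg (cis t)))) \<le> Hinf_norm f"
    unfolding Hinf_norm_def by (rule cSUP_upper[OF _ bdd])
  then show ?thesis using H ca by simp
qed


lemma N_pos: "\<bar>a\<bar> < 1 \<Longrightarrow> 0 < 1 - 2 * a * cos w + (a::real)^2"
proof -
  assume a: "\<bar>a\<bar> < 1"
  have "\<bar>a * cos w\<bar> \<le> \<bar>a\<bar>"
    unfolding abs_mult using abs_cos_le_one[of w] by (simp add: mult_left_le)
  then have "a * cos w \<le> \<bar>a\<bar>" by linarith
  moreover have "0 < (1 - \<bar>a\<bar>)^2" using a by simp
  moreover have "(1 - \<bar>a\<bar>)^2 = 1 - 2 * \<bar>a\<bar> + a^2" by (simp add: power2_eq_square algebra_simps)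
  ultimately show ?thesis by linarith
qed

lemma norm_sq_1_minus: "cmod (1 - of_real a * cis t) ^ 2 = 1 - 2 * a * cos t + a^2"
proof -
  have "cmod (1 - of_real a * cis t) ^ 2 = (1 - a * cos t)^2 + (a * sin t)^2" by (simp add: cmod_power2)
  also have "\<dots> = 1 - 2 * a * cos t + a^2 * (sin t ^ 2 + cos t ^ 2)" by algebra
  finally show ?thesis by simp
qed

lemma norm_sq_minus: "cmod (cis t - of_real a) ^ 2 = 1 - 2 * a * cos t + a^2"
proof -
  have "cmod (cis t - of_real a) ^ 2 = (cos t - a)^2 + (sin t)^2" by (simp add: cmod_power2)
  also have "\<dots> = 1 - 2 * a * cos t + a^2 + (sin t ^ 2 + cos t ^ 2 - 1)" by algebra
  finally show ?thesis by simp
qed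


lemma frac_id0:
  fixes x u v S k :: complex
  assumes "u \<noteq> 0" "v \<noteq> 0" "S \<noteq> 0"
  shows "x * (S * k / u ^ 2) / (S * v / u) = x * k / (u * v)"
  using assms by (simp add: field_simps power2_eq_square)

lemma frac_id:
  fixes x A S :: complex
  assumes "x - A \<noteq> 0" "1 - A * x \<noteq> 0" "S \<noteq> 0"
  shows "x * (S * (A^2 - 1) / (x - A)^2) / (S * (1 - A * x) / (x - A)) = x * (A^2 - 1) / ((x - A) * (1 - A * x))"
  by (rule frac_id0[OF assms])

lemma allpass_mk:
  fixes a s :: real
  assumes a: "\<bar>a\<bar> < 1" and s: "s = 1 \<or> s = -1"
  defines "f0 \<equiv> \<lambda>z. of_real s * (1 - of_real a * z) / (z - of_real a)"
  shows "f0 \<in> AP" "Hinf_norm f0 = 1"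
    and "phase_deriv f0 w = (a^2 - 1) / (1 - 2 * a * cos w + a^2)"
proof -
  have N: "0 < 1 - 2 * a * cos t + a^2" for t using N_pos[OF a] .
  have nz1: "1 - of_real a * cis t \<noteq> 0" for t using N[of t] norm_sq_1_minus[where a=a and t=t] by auto
  have nz2: "cis t - of_real a \<noteq> 0" for t using N[of t] norm_sq_minus[where a=a and t=t] by auto
  have s0: "s \<noteq> 0" and abss: "\<bar>s\<bar> = 1" using s by auto
  have unit: "cmod (f0 (cis t)) = 1" for t
  proof -
    have "cmod (1 - of_real a * cis t) ^ 2 = cmod (cis t - of_real a) ^ 2"
      using norm_sq_1_minus norm_sq_minus by simp
    then have "cmod (1 - of_real a * cis t) = cmod (cis t - of_real a)"
      by (simp add: power2_eq_iff_nonneg)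
    then show ?thesis using nz2[of t] abss by (simp add: f0_def norm_mult norm_divide)
  qed
  have RH: "RH_inf f0"
    unfolding RH_inf_def
  proof (intro exI conjI allI impI)
    show "[:-a, 1:] \<noteq> 0" by simp
    show "degree [:s, -s*a:] \<le> degree [:-a, 1:]" by simp
    fix z
    have pq: "poly (map_poly complex_of_real [:-a, 1:]) z = z - of_real a" by (simp add: map_poly_pCons)
    have pp: "poly (map_poly complex_of_real [:s, -s*a:]) z = of_real s * (1 - of_real a * z)"
      by (simp add: map_poly_pCons algebra_simps)
    show "norm z < 1" if "poly (map_poly complex_of_real [:-a, 1:]) z = 0"
      using that a unfolding pq by simp
    show "f0 z = poly (map_poly complex_of_real [:s, -s*a:]) z / poly (map_poly complex_of_real [:-a, 1:]) z"
      if "poly (map_poly complex_of_real [:-a, 1:]) z \<noteq> 0"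
      unfolding pq pp f0_def by simp
  qed
  show "f0 \<in> AP" unfolding AP_def using RH unit by simp
  have "Hinf_norm f0 = (SUP w\<in>{-pi<..pi}. (1::real))"
    unfolding Hinf_norm_def using unit by simp
  also have "\<dots> = 1" by (rule cSUP_const) simp
  finally show "Hinf_norm f0 = 1" .
  define z0 where "z0 = cis w"
  define D where "D = of_real s * (of_real a ^ 2 - 1) / (z0 - of_real a) ^ 2"
  have fd: "(f0 has_field_derivative D) (at z0)"
  proof -
    have "(f0 has_field_derivative
      (of_real s * (- of_real a) * (z0 - of_real a) - of_real s * (1 - of_real a * z0) * 1) / (z0 - of_real a)^2) (at z0)"
      unfolding f0_def using nz2[of w] unfolding z0_def
      by (auto intro!: derivative_eq_intros simp: power2_eq_square)
    moreover have "(of_real s * (- of_real a) * (z0 - of_real a) - of_real s * (1 - of_real a * z0) * 1) = of_real s * (of_real a ^ 2 - 1)"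
      by (simp add: power2_eq_square algebra_simps)
    ultimately show ?thesis by (simp add: D_def)
  qed
  have fc: "isCont f0 (cis t)" for t
    unfolding f0_def using nz2[of t] by (intro continuous_intros) auto
  have f0nz: "f0 (cis w) \<noteq> 0" using unit[of w] by auto
  have "phase_deriv f0 w = Re (cis w * D / f0 (cis w))"
    by (rule phase_deriv_eq[where R=f0]) (use fd fc f0nz in \<open>auto simp: z0_def\<close>)
  also have "cis w * D / f0 (cis w) = of_real ((a^2 - 1) / (1 - 2 * a * cos w + a^2))"
  proof -
    have prod: "(z0 - of_real a) * (1 - of_real a * z0) = z0 * of_real (1 - 2 * a * cos w + a^2)"
    proof -
      have "z0 * z0 = cis (2 * w)" by (simp add: z0_def cis_mult)
      moreover have "cis (2 * w) = of_real (2 * cos w) * z0 - 1"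
        using cos_double_cos[of w] sin_double[of w] by (simp add: complex_eq_iff z0_def power2_eq_square algebra_simps)
      ultimately have "z0 * z0 = of_real (2 * cos w) * z0 - 1" by simp
      then have hz: "z0 * z0 = 2 * of_real (cos w) * z0 - 1" by simp
      have ofr: "(of_real (1 - 2 * a * cos w + a^2) :: complex) = 1 - 2 * of_real a * of_real (cos w) + (of_real a)^2"
        by simp
      show ?thesis unfolding ofr using hz by algebra
    qed
    have z0nz: "z0 \<noteq> 0" by (simp add: z0_def)
    have e: "cis w * D / f0 (cis w) = z0 * (of_real a ^ 2 - 1) / ((z0 - of_real a) * (1 - of_real a * z0))"
      unfolding D_def f0_def z0_def
      by (rule frac_id) (use nz1[of w] nz2[of w] s0 in \<open>auto simp: mult.commute\<close>)
    have "z0 * (of_real a ^ 2 - 1) / (z0 * of_real (1 - 2 * a * cos w + a^2))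
        = (of_real a ^ 2 - 1) / of_real (1 - 2 * a * cos w + a^2)"
      using z0nz by (rule mult_divide_mult_cancel_left)
    also have "\<dots> = of_real ((a^2 - 1) / (1 - 2 * a * cos w + a^2))" by simp
    finally show ?thesis unfolding e prod .
  qed
  finally show "phase_deriv f0 w = (a^2 - 1) / (1 - 2 * a * cos w + a^2)" by simp
qed


lemma L_I: fixes a s st ct sw cw S :: real
  shows "a * (st - s * sw) = S \<Longrightarrow> S = st * cw + ct * sw \<Longrightarrow> - (s * a * sw) = ct * sw + st * (cw - a)"
  by (simp add: algebra_simps)

lemma L_R: fixes a s st ct sw cw S :: real
  shows "a * (st - s * sw) = S \<Longrightarrow> S = st * cw + ct * sw \<Longrightarrow> s * s = 1 \<Longrightarrow> st^2 + ct^2 = 1 \<Longrightarrow> sw^2 + cw^2 = 1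
   \<Longrightarrow> (st - s * sw) * (s * (1 - a * cw) - (ct * (cw - a) - st * sw)) = 0"
  by algebra

lemma L_id: fixes a s st ct sw cw :: real
  shows "s * (1 - a * cw) = ct * (cw - a) - st * sw \<Longrightarrow> - (s * a * sw) = ct * sw + st * (cw - a) \<Longrightarrow> s * s = 1 \<Longrightarrow> st^2 + ct^2 = 1 \<Longrightarrow> sw^2 + cw^2 = 1
   \<Longrightarrow> st * (1 - 2 * a * cw + a^2) + s * (1 - a^2) * sw = 0"
  by algebra

lemma L_fin: fixes a s st N sw :: real
  shows "st * N + s * (1 - a^2) * sw = 0 \<Longrightarrow> s * s = 1 \<Longrightarrow> (a^2 - 1) * sw = - (- s * st) * N"
  by algebra

lemma extremal:
  fixes wp tp :: real
  assumes w: "0 \<le> wp" "wp \<le> pi"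
    and ends: "wp = 0 \<or> wp = pi \<Longrightarrow> \<exists>k::int. tp = of_int k * pi"
  shows "\<exists>f0\<in>AP_at wp tp. phase_deriv f0 wp = - \<bar>sin tp\<bar> / sin wp"
proof (cases "sin tp = 0")
  case True
  define f0 where "f0 = (\<lambda>z::complex. cis tp)"
  have ct: "cis tp = of_real (cos tp)" using True by (simp add: complex_eq_iff)
  have RH: "RH_inf f0"
    unfolding RH_inf_def
  proof (intro exI conjI allI impI)
    show "[:1:] \<noteq> (0::real poly)" by simp
    show "degree [:cos tp:] \<le> degree [:1::real:]" by simp
    fix z
    show "norm z < 1" if "poly (map_poly complex_of_real [:1:]) z = 0" using that by (simp add: map_poly_pCons)
    show "f0 z = poly (map_poly complex_of_real [:cos tp:]) z / poly (map_poly complex_of_real [:1:]) z"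
      by (simp add: f0_def ct map_poly_pCons)
  qed
  have unit: "cmod (f0 z) = 1" for z by (simp add: f0_def)
  have H: "Hinf_norm f0 = 1"
  proof -
    have "Hinf_norm f0 = (SUP w\<in>{-pi<..pi}. (1::real))" unfolding Hinf_norm_def using unit by simp
    also have "\<dots> = 1" by (rule cSUP_const) simp
    finally show ?thesis .
  qed
  have "f0 \<in> AP_at wp tp" unfolding AP_at_def AP_def RF_def using RH unit H by (simp add: f0_def)
  moreover have "phase_deriv f0 wp = Re (cis wp * 0 / f0 (cis wp))"
    by (rule phase_deriv_eq[where R=f0]) (auto simp: f0_def)
  ultimately show ?thesis using True by auto
next
  case False
  have wne: "wp \<noteq> 0 \<and> wp \<noteq> pi"
  proof
    show "wp \<noteq> 0"
    proof
      assume "wp = 0"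
      then obtain k :: int where "tp = of_int k * pi" using ends by auto
      then show False using False by (simp add: sin_zero_iff_int2)
    qed
    show "wp \<noteq> pi"
    proof
      assume "wp = pi"
      then obtain k :: int where "tp = of_int k * pi" using ends by auto
      then show False using False by (simp add: sin_zero_iff_int2)
    qed
  qed
  then have sw: "sin wp > 0" using w by (intro sin_gt_zero) auto
  have cwl: "\<bar>cos wp\<bar> < 1"
  proof -
    have "cos wp ^ 2 < 1" using sw sin_cos_squared_add[of wp] by (smt (verit) zero_less_power2)
    then show ?thesis by (simp add: abs_square_less_1)
  qed
  define s :: real where "s = (if sin tp > 0 then -1 else 1)"
  have s: "s = 1 \<or> s = -1" by (simp add: s_def)
  have ss: "s * s = 1" by (simp add: s_def)
  have abst: "\<bar>sin tp\<bar> = - s * sin tp" using False by (simp add: s_def)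
  define d where "d = sin tp - s * sin wp"
  have absd: "\<bar>d\<bar> = \<bar>sin tp\<bar> + sin wp" using False sw by (auto simp: d_def s_def)
  have d0: "d \<noteq> 0" using absd sw by auto
  define a where "a = sin (tp + wp) / d"
  have ad: "a * d = sin (tp + wp)" using d0 by (simp add: a_def)
  have a1: "\<bar>a\<bar> < 1"
  proof -
    have "\<bar>sin (tp + wp)\<bar> \<le> \<bar>sin tp\<bar> * \<bar>cos wp\<bar> + \<bar>cos tp\<bar> * sin wp"
      using sw by (simp add: sin_add abs_mult) (metis abs_mult abs_of_pos abs_triangle_ineq sw)
    also have "\<dots> < \<bar>sin tp\<bar> + sin wp"
    proof -
      have "\<bar>sin tp\<bar> * \<bar>cos wp\<bar> < \<bar>sin tp\<bar>" using cwl False by (simp add: mult_less_cancel_left1)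
      moreover have "\<bar>cos tp\<bar> * sin wp \<le> sin wp" using sw abs_cos_le_one[of tp] by (simp add: mult_le_cancel_right1)
      ultimately show ?thesis by linarith
    qed
    finally have "\<bar>sin (tp + wp)\<bar> < \<bar>d\<bar>" using absd by simp
    then show ?thesis using d0 by (simp add: a_def abs_divide divide_less_eq_1)
  qed
  define f0 where "f0 = (\<lambda>z::complex. of_real s * (1 - of_real a * z) / (z - of_real a))"
  have AP: "f0 \<in> AP" and H: "Hinf_norm f0 = 1"
    and ph: "phase_deriv f0 wp = (a^2 - 1) / (1 - 2 * a * cos wp + a^2)"
    using allpass_mk[OF a1 s] unfolding f0_def by auto
  have trig1: "sin tp ^ 2 + cos tp ^ 2 = 1" "sin wp ^ 2 + cos wp ^ 2 = 1" by simp_all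
  have Sadd: "sin (tp + wp) = sin tp * cos wp + cos tp * sin wp" by (rule sin_add)
  have Cadd: "cos (tp + wp) = cos tp * cos wp - sin tp * sin wp" by (rule cos_add)
  have Ieq: "- (s * a * sin wp) = cos tp * sin wp + sin tp * (cos wp - a)"
    using L_I[OF ad[unfolded d_def] Sadd] .
  have "d * (s * (1 - a * cos wp) - (cos tp * (cos wp - a) - sin tp * sin wp)) = 0"
    using L_R[OF ad[unfolded d_def] Sadd ss trig1] unfolding d_def .
  then have Req: "s * (1 - a * cos wp) = cos tp * (cos wp - a) - sin tp * sin wp"
    using d0 by simp
  have ceq: "of_real s * (1 - of_real a * cis wp) = cis tp * (cis wp - of_real a)"
    using Req Ieq by (simp add: complex_eq_iff algebra_simps)
  have nz2: "cis wp - of_real a \<noteq> 0" using N_pos[OF a1, of wp] norm_sq_minus[where a=a and t=wp] by auto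
  have val: "f0 (cis wp) = cis tp" unfolding f0_def using ceq nz2 by (simp add: divide_eq_eq)
  have ident: "sin tp * (1 - 2 * a * cos wp + a^2) + s * (1 - a^2) * sin wp = 0"
    using L_id[OF Req Ieq ss trig1] .
  have N: "0 < 1 - 2 * a * cos wp + a^2" by (rule N_pos[OF a1])
  have "(a^2 - 1) / (1 - 2 * a * cos wp + a^2) = - \<bar>sin tp\<bar> / sin wp"
  proof -
    have "(a^2 - 1) * sin wp = - \<bar>sin tp\<bar> * (1 - 2 * a * cos wp + a^2)"
      unfolding abst using L_fin[OF ident ss] .
    then show ?thesis using N sw by (simp add: divide_eq_eq field_simps)
  qed
  moreover have "f0 \<in> AP_at wp tp"
    unfolding AP_at_def RF_def using AP H val by (auto simp: AP_def)
  ultimately show ?thesis using ph by auto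
qed

theorem proposition3:
  fixes wp tp :: real
  assumes "0 \<le> wp" and "wp \<le> pi"
    and "wp = 0 \<or> wp = pi \<Longrightarrow> \<exists>k::int. tp = of_int k * pi"
  shows "(SUP f\<in>RF wp tp. ereal (phase_deriv f wp)) = (SUP f\<in>AP_at wp tp. ereal (phase_deriv f wp))"
proof -
  define B where "B = - \<bar>sin tp\<bar> / sin wp"
  obtain f0 where f0: "f0 \<in> AP_at wp tp" "phase_deriv f0 wp = B"
    using extremal[OF assms] unfolding B_def by blast
  have sub: "AP_at wp tp \<subseteq> RF wp tp" by (simp add: AP_at_def)
  have le: "phase_deriv f wp \<le> B" if "f \<in> RF wp tp" for f
  proof -
    from that have RH: "RH_inf f" and H: "Hinf_norm f = 1" and v: "f (cis wp) = cis tp"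
      by (auto simp: RF_def)
    show ?thesis unfolding B_def
      by (rule RF_bound[OF RH RH_circle_bound[OF RH H] v assms(1,2)])
  qed
  have "(SUP f\<in>RF wp tp. ereal (phase_deriv f wp)) = ereal B"
  proof (rule antisym)
    show "(SUP f\<in>RF wp tp. ereal (phase_deriv f wp)) \<le> ereal B"
      using le by (intro SUP_least) simp
    show "ereal B \<le> (SUP f\<in>RF wp tp. ereal (phase_deriv f wp))"
      using f0 sub by (intro SUP_upper2[of f0]) auto
  qed
  moreover have "(SUP f\<in>AP_at wp tp. ereal (phase_deriv f wp)) = ereal B"
  proof (rule antisym)
    show "(SUP f\<in>AP_at wp tp. ereal (phase_deriv f wp)) \<le> ereal B"
      using le sub by (intro SUP_least) auto
    show "ereal B \<le> (SUP f\<in>AP_at wp tp. ereal (phase_deriv f wp))"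
      using f0 by (intro SUP_upper2[of f0]) auto
  qed
  ultimately show ?thesis by simp
qed

end
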